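(* Let $k>1$, $p>1$, and $r,s\in(0,1)$ with $r\ge s$. Then $$\left(\frac{\arcsin_p(s)}{\arcsin_p(r)}\right)^k\le\frac{\arcsin_p(s^k)}{\arcsin_p(r^k)},\qquad \left(\frac{\operatorname{artanh}_p(s)}{\operatorname{artanh}_p(r)}\right)^k\le\frac{\operatorname{artanh}_p(s^k)}{\operatorname{artanh}_p(r^k)},\qquad \frac{\operatorname{arsinh}_p(s^k)}{\operatorname{arsinh}_p(r^k)}\le\left(\frac{\operatorname{arsinh}_p(s)}{\operatorname{arsinh}_p(r)}\right)^k.$$
   Context: For $p>1$ and $y\in(0,1)$: $\arcsin_p y=\int_0^y(1-t^p)^{-1/p}dt$, $\operatorname{arsinh}_p y=\int_0^y(1+t^p)^{-1/p}dt$, $\operatorname{artanh}_p y=\int_0^y(1-t^p)^{-1}dt$. *)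

theory Defs
  imports "HOL-Analysis.Analysis"
begin

definition arcsin_p :: "real \<Rightarrow> real \<Rightarrow> real" where
  "arcsin_p p y = integral {0..y} (\<lambda>t. (1 - t powr p) powr (- 1 / p))"

definition arsinh_p :: "real \<Rightarrow> real \<Rightarrow> real" where
  "arsinh_p p y = integral {0..y} (\<lambda>t. (1 + t powr p) powr (- 1 / p))"

definition artanh_p :: "real \<Rightarrow> real \<Rightarrow> real" where
  "artanh_p p y = integral {0..y} (\<lambda>t. 1 / (1 - t powr p))"

end

theory Submission imports Defs begin

lemma F_deriv:
  assumes cont: "\<And>b. b < 1 \<Longrightarrow> continuous_on {0..b} f"
    and x: "0 < x" "x < 1"
  shows "((\<lambda>u. integral {0..u} f) has_real_derivative f x) (at x)"
proof -
  define b where "b = (1 + x) / 2"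
  have "b < 1" "x < b" using x by (auto simp: b_def)
  have d: "((\<lambda>u. integral {0..u} f) has_real_derivative f x) (at x within {0..b})"
    by (rule integral_has_real_derivative[OF cont[OF \<open>b<1\<close>]]) (use x \<open>x<b\<close> in auto)
  have "x \<in> interior {0..b}" using x \<open>x<b\<close> by auto
  then have e: "at x within {0..b} = at x" by (rule at_within_interior)
  show ?thesis using d unfolding e .
qed

lemma key_ineq:
  fixes f :: "real \<Rightarrow> real" and \<sigma> :: real
  assumes cont: "\<And>b. b < 1 \<Longrightarrow> continuous_on {0..b} f"
    and ratio: "\<And>t x l. 0 \<le> t \<Longrightarrow> t \<le> x \<Longrightarrow> x < 1 \<Longrightarrow> 0 < l \<Longrightarrow> l \<le> 1 \<Longrightarrow>
        \<sigma> * (f t * f (l * x)) \<le> \<sigma> * (f (l * t) * f x)"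
    and y: "0 < y" "y \<le> x" "x < 1"
  shows "\<sigma> * (y * f y * integral {0..x} f) \<le> \<sigma> * (x * f x * integral {0..y} f)"
proof -
  define l where "l = y / x"
  have x0: "0 < x" using y by auto
  have l: "0 < l" "l \<le> 1" "l * x = y" using y x0 by (auto simp: l_def)
  have I1: "(f has_integral integral {0..y} f) {0..y}"
    using cont[of y] y by (intro integrable_integral integrable_continuous_real) auto
  have Ix: "(f has_integral integral {0..x} f) {0..x}"
    using cont[of x] y by (intro integrable_integral integrable_continuous_real) auto
  have img: "(\<lambda>t. t / l) ` {0..y} = {0..x}"
  proof -
    have "(\<lambda>t. t / l) ` {0..y} = {0/l..y/l}" using l(1) by (rule image_divide_atLeastAtMost)
    moreover have "y / l = x" using y x0 by (simp add: l_def)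
    ultimately show ?thesis by simp
  qed
  have I2: "((\<lambda>t. f (l * t)) has_integral (1 / l) * integral {0..y} f) {0..x}"
    using has_integral_stretch_real[OF I1, of l] l img by simp
  have A: "((\<lambda>t. \<sigma> * (f t * f y)) has_integral \<sigma> * (integral {0..x} f * f y)) {0..x}"
    using has_integral_mult_right[OF has_integral_mult_left[OF Ix, of "f y"], of \<sigma>] .
  have B: "((\<lambda>t. \<sigma> * (f (l*t) * f x)) has_integral \<sigma> * ((1 / l) * integral {0..y} f * f x)) {0..x}"
    using has_integral_mult_right[OF has_integral_mult_left[OF I2, of "f x"], of \<sigma>] .
  have "\<sigma> * (integral {0..x} f * f y) \<le> \<sigma> * ((1 / l) * integral {0..y} f * f x)"
  proof (rule has_integral_le[OF A B])
    fix t assume t: "t \<in> {0..x}"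
    have "\<sigma> * (f t * f (l * x)) \<le> \<sigma> * (f (l * t) * f x)"
      by (rule ratio) (use t l y in auto)
    then show "\<sigma> * (f t * f y) \<le> \<sigma> * (f (l * t) * f x)" by (simp only: l(3))
  qed
  then have "y * (\<sigma> * (integral {0..x} f * f y)) \<le> y * (\<sigma> * ((1 / l) * integral {0..y} f * f x))"
    by (rule mult_left_mono) (use y in auto)
  also have "y * (\<sigma> * ((1 / l) * integral {0..y} f * f x)) = \<sigma> * (x * f x * integral {0..y} f)"
    using y x0 by (simp add: l_def field_simps)
  finally show ?thesis by (simp add: ac_simps)
qed

lemma gen_main:
  fixes f :: "real \<Rightarrow> real" and \<sigma> c k r s :: real
  assumes cont: "\<And>b. b < 1 \<Longrightarrow> continuous_on {0..b} f"
    and ratio: "\<And>t x l. 0 \<le> t \<Longrightarrow> t \<le> x \<Longrightarrow> x < 1 \<Longrightarrow> 0 < l \<Longrightarrow> l \<le> 1 \<Longrightarrow>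
        \<sigma> * (f t * f (l * x)) \<le> \<sigma> * (f (l * t) * f x)"
    and pos: "\<And>t. 0 \<le> t \<Longrightarrow> t < 1 \<Longrightarrow> c \<le> f t" "0 < c"
    and sig: "\<sigma> = 1 \<or> \<sigma> = -1"
    and k: "k > 1" and rs: "0 < s" "s \<le> r" "r < 1"
  shows "\<sigma> * ((integral {0..s} f / integral {0..r} f) powr k)
     \<le> \<sigma> * (integral {0..s powr k} f / integral {0..r powr k} f)"
proof -
  define F where "F = (\<lambda>u. integral {0..u} f)"
  have Fpos: "F u > 0" if u: "0 < u" "u < 1" for u
  proof -
    have "integral {0..u} (\<lambda>_. c) \<le> integral {0..u} f"
      by (rule integral_le) (use cont[of u] u pos in \<open>auto intro: integrable_continuous_real\<close>)
    moreover have "integral {0..u} (\<lambda>_. c) > 0" using u pos by simp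
    ultimately show ?thesis unfolding F_def by linarith
  qed
  have fpos: "f u > 0" if "0 \<le> u" "u < 1" for u using pos that by force
  have dF: "DERIV F u :> f u" if "0 < u" "u < 1" for u
    unfolding F_def using F_deriv[OF cont that] by blast
  define L where "L = (\<lambda>x. \<sigma> * (ln (F (x powr k)) - k * ln (F x)))"
  have dL: "\<exists>D. DERIV L x :> D \<and> D \<le> 0" if x: "s \<le> x" "x \<le> r" for x
  proof -
    define y where "y = x powr k"
    have x0: "0 < x" "x < 1" using x rs by auto
    have y: "0 < y" "y \<le> x" "y < 1" using x0 k powr_mono'[of 1 k x] unfolding y_def by auto
    have d1: "DERIV (\<lambda>x. F (x powr k)) x :> f y * (k * x powr (k-1))"
      unfolding y_def by (rule DERIV_chain2[OF dF has_real_derivative_powr]) (use y x0 in \<open>auto simp: y_def\<close>)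
    have d2: "DERIV (\<lambda>x. ln (F (x powr k))) x :> inverse (F y) * (f y * (k * x powr (k-1)))"
      unfolding y_def by (rule DERIV_chain2[OF DERIV_ln d1[unfolded y_def]]) (use Fpos y in \<open>auto simp: y_def\<close>)
    have d3: "DERIV (\<lambda>x. ln (F x)) x :> inverse (F x) * f x"
      by (rule DERIV_chain2[OF DERIV_ln dF]) (use Fpos x0 in auto)
    have dd: "DERIV L x :> \<sigma> * (inverse (F y) * (f y * (k * x powr (k-1))) - k * (inverse (F x) * f x))"
      unfolding L_def by (intro DERIV_cmult DERIV_diff d2 d3)
    have key: "\<sigma> * (y * f y * F x) \<le> \<sigma> * (x * f x * F y)"
      unfolding F_def by (rule key_ineq[OF cont ratio]) (use y x0 in auto)
    have xk: "x powr (k-1) = y / x" using x0 by (simp add: powr_diff y_def)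
    have Fx: "F x > 0" "F y > 0" using Fpos x0 y by auto
    have eq: "\<sigma> * (inverse (F y) * (f y * (k * x powr (k-1))) - k * (inverse (F x) * f x))
      = (k / (x * F y * F x)) * (\<sigma> * (y * f y * F x) - \<sigma> * (x * f x * F y))"
      unfolding xk using x0 Fx by (simp add: field_simps)
    have "(k / (x * F y * F x)) * (\<sigma> * (y * f y * F x) - \<sigma> * (x * f x * F y)) \<le> 0"
      using key k x0 Fx by (intro mult_nonneg_nonpos) auto
    then show ?thesis using dd eq by auto
  qed
  have Lrs: "L r \<le> L s" by (rule DERIV_nonpos_imp_nonincreasing[OF rs(2)]) (use dL in auto)
  have Fs: "F s > 0" "F r > 0" "F (s powr k) > 0" "F (r powr k) > 0"
    using Fpos rs powr_mono'[of 1 k s] powr_mono'[of 1 k r] k by auto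
  have e1: "(F s / F r) powr k = exp (k * (ln (F s) - ln (F r)))"
    using Fs by (simp add: powr_def ln_div)
  have e2: "F (s powr k) / F (r powr k) = exp (ln (F (s powr k)) - ln (F (r powr k)))"
    using Fs by (simp add: exp_diff)
  have "\<sigma> * ((F s / F r) powr k) \<le> \<sigma> * (F (s powr k) / F (r powr k))"
    using sig
  proof
    assume "\<sigma> = 1"
    then show ?thesis using Lrs unfolding e1 e2 L_def by (simp add: algebra_simps)
  next
    assume "\<sigma> = -1"
    then show ?thesis using Lrs unfolding e1 e2 L_def by (simp add: algebra_simps)
  qed
  then show ?thesis unfolding F_def .
qed

lemma pow_facts:
  fixes p t x l :: real
  assumes "p > 1" "0 \<le> t" "t \<le> x" "x < 1" "0 < l" "l \<le> 1"
  shows "(l*t) powr p = l powr p * t powr p" "(l*x) powr p = l powr p * x powr p"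
    "0 \<le> t powr p" "t powr p \<le> x powr p" "x powr p < 1" "0 < l powr p" "l powr p \<le> 1"
proof -
  show "(l*t) powr p = l powr p * t powr p" "(l*x) powr p = l powr p * x powr p"
    using assms by (auto simp: powr_mult)
  show "0 \<le> t powr p" "0 < l powr p" using assms by auto
  show "t powr p \<le> x powr p" using assms by (intro powr_mono2) auto
  have "x powr p < 1 powr p" using assms by (intro powr_less_mono2) auto
  then show "x powr p < 1" by simp
  have "l powr p \<le> 1 powr p" using assms by (intro powr_mono2) auto
  then show "l powr p \<le> 1" by simp
qed

lemma cont_tp:
  fixes p b :: real assumes "p > 1"
  shows "continuous_on {0..b} (\<lambda>t. t powr p)"
  by (rule continuous_on_powr'[OF continuous_on_id continuous_on_const]) (use assms in auto)

lemma tp_lt1: "p > 1 \<Longrightarrow> 0 \<le> t \<Longrightarrow> t < 1 \<Longrightarrow> t powr p < (1::real)"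
  using powr_less_mono2[of p t 1] by simp

lemma arcsin_part:
  fixes p k r s :: real
  assumes "k > 1" and "p > 1" and "0 < s" "s \<le> r" "r < 1"
  shows "(arcsin_p p s / arcsin_p p r) powr k \<le> arcsin_p p (s powr k) / arcsin_p p (r powr k)"
proof -
  define f where "f = (\<lambda>t::real. (1 - t powr p) powr (- 1 / p))"
  have "1 * ((integral {0..s} f / integral {0..r} f) powr k)
     \<le> 1 * (integral {0..s powr k} f / integral {0..r powr k} f)"
  proof (rule gen_main[where f=f and \<sigma>=1 and c=1 and k=k and r=r and s=s])
    fix b :: real assume b: "b < 1"
    have "\<forall>t\<in>{0..b}. 0 < 1 - t powr p"
    proof
      fix t assume "t \<in> {0..b}"
      then show "0 < 1 - t powr p" using tp_lt1[OF assms(2), of t] b by auto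
    qed
    then show "continuous_on {0..b} f" unfolding f_def
      by (intro continuous_on_powr'[OF continuous_on_diff[OF continuous_on_const cont_tp] continuous_on_const])
        (use assms in auto)
  next
    fix t :: real assume t: "0 \<le> t" "t < 1"
    have "0 < 1 - t powr p" "1 - t powr p \<le> 1" using tp_lt1[OF assms(2) t] t by auto
    then have "1 powr (-1/p) \<le> (1 - t powr p) powr (-1/p)"
      using assms by (intro powr_mono2') auto
    then show "1 \<le> f t" by (simp add: f_def)
  next
    fix t x l :: real
    assume h: "0 \<le> t" "t \<le> x" "x < 1" "0 < l" "l \<le> 1"
    note pf = pow_facts[OF assms(2) h]
    define T X c where "T = t powr p" "X = x powr p" "c = l powr p"
    have pf': "0 \<le> T" "T \<le> X" "X < 1" "0 < c" "c \<le> 1" using pf by (auto simp: T_X_c_def)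
    have d: "(1 - T) * (1 - c*X) - (1 - c*T) * (1 - X) = (1 - c) * (X - T)" by algebra
    have "(1 - c) * (X - T) \<ge> 0" using pf' by auto
    then have le: "(1 - c*T) * (1 - X) \<le> (1 - T) * (1 - c*X)" using d by linarith
    have cT: "c*T \<le> T" "c*X \<le> X" using pf' mult_left_le_one_le[of T c] mult_left_le_one_le[of X c] by auto
    have p1: "0 < (1 - c*T) * (1 - X)" using pf' cT by (intro mult_pos_pos) auto
    have "((1 - T) * (1 - c*X)) powr (-1/p) \<le> ((1 - c*T) * (1 - X)) powr (-1/p)"
      using assms le p1 by (intro powr_mono2') auto
    moreover have "0 \<le> 1 - T" "0 \<le> 1 - c*X" "0 \<le> 1 - c*T" "0 \<le> 1 - X"
      using pf' cT by auto
    ultimately show "1 * (f t * f (l * x)) \<le> 1 * (f (l * t) * f x)"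
      using pf by (simp add: f_def T_X_c_def powr_mult)
  qed (use assms in auto)
  then show ?thesis by (simp add: arcsin_p_def f_def)
qed


lemma artanh_part:
  fixes p k r s :: real
  assumes "k > 1" and "p > 1" and "0 < s" "s \<le> r" "r < 1"
  shows "(artanh_p p s / artanh_p p r) powr k \<le> artanh_p p (s powr k) / artanh_p p (r powr k)"
proof -
  define f where "f = (\<lambda>t::real. 1 / (1 - t powr p))"
  have "1 * ((integral {0..s} f / integral {0..r} f) powr k)
     \<le> 1 * (integral {0..s powr k} f / integral {0..r powr k} f)"
  proof (rule gen_main[where f=f and \<sigma>=1 and c=1 and k=k and r=r and s=s])
    fix b :: real assume b: "b < 1"
    have "\<forall>t\<in>{0..b}. 1 - t powr p \<noteq> 0"
    proof
      fix t assume "t \<in> {0..b}"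
      then show "1 - t powr p \<noteq> 0" using tp_lt1[OF assms(2), of t] b by auto
    qed
    then show "continuous_on {0..b} f" unfolding f_def
      by (intro continuous_on_divide[OF continuous_on_const continuous_on_diff[OF continuous_on_const cont_tp]])
        (use assms in auto)
  next
    fix t :: real assume t: "0 \<le> t" "t < 1"
    have "0 < 1 - t powr p" "1 - t powr p \<le> 1" using tp_lt1[OF assms(2) t] t by auto
    then show "1 \<le> f t" by (simp add: f_def)
  next
    fix t x l :: real
    assume h: "0 \<le> t" "t \<le> x" "x < 1" "0 < l" "l \<le> 1"
    note pf = pow_facts[OF assms(2) h]
    define T X c where "T = t powr p" "X = x powr p" "c = l powr p"
    have pf': "0 \<le> T" "T \<le> X" "X < 1" "0 < c" "c \<le> 1" using pf by (auto simp: T_X_c_def)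
    have d: "(1 - T) * (1 - c*X) - (1 - c*T) * (1 - X) = (1 - c) * (X - T)" by algebra
    have "(1 - c) * (X - T) \<ge> 0" using pf' by auto
    then have le: "(1 - c*T) * (1 - X) \<le> (1 - T) * (1 - c*X)" using d by linarith
    have cT: "c*T \<le> T" "c*X \<le> X" using pf' mult_left_le_one_le[of T c] mult_left_le_one_le[of X c] by auto
    have p1: "0 < (1 - c*T) * (1 - X)" using pf' cT by (intro mult_pos_pos) auto
    have "1 / ((1 - T) * (1 - c*X)) \<le> 1 / ((1 - c*T) * (1 - X))"
      using le p1 by (intro frac_le) auto
    then show "1 * (f t * f (l * x)) \<le> 1 * (f (l * t) * f x)"
      using pf by (simp add: f_def T_X_c_def mult.commute)
  qed (use assms in auto)
  then show ?thesis by (simp add: artanh_p_def f_def)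
qed

lemma arsinh_part:
  fixes p k r s :: real
  assumes "k > 1" and "p > 1" and "0 < s" "s \<le> r" "r < 1"
  shows "arsinh_p p (s powr k) / arsinh_p p (r powr k) \<le> (arsinh_p p s / arsinh_p p r) powr k"
proof -
  define f where "f = (\<lambda>t::real. (1 + t powr p) powr (- 1 / p))"
  have "-1 * ((integral {0..s} f / integral {0..r} f) powr k)
     \<le> -1 * (integral {0..s powr k} f / integral {0..r powr k} f)"
  proof (rule gen_main[where f=f and \<sigma>="-1" and c="2 powr (-1/p)" and k=k and r=r and s=s])
    fix b :: real assume b: "b < 1"
    have pp: "\<forall>t\<in>{0..b}. 0 < 1 + t powr p"
      by (auto intro: add_pos_nonneg)
    show "continuous_on {0..b} f" unfolding f_def
      by (intro continuous_on_powr'[OF continuous_on_add[OF continuous_on_const cont_tp] continuous_on_const])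
        (use assms pp in auto)
  next
    fix t :: real assume t: "0 \<le> t" "t < 1"
    have "0 < 1 + t powr p" "1 + t powr p \<le> 2" using tp_lt1[OF assms(2) t] t by (auto intro: add_pos_nonneg)
    then show "2 powr (-1/p) \<le> f t" unfolding f_def
      using assms by (intro powr_mono2') auto
  next
    fix t x l :: real
    assume h: "0 \<le> t" "t \<le> x" "x < 1" "0 < l" "l \<le> 1"
    note pf = pow_facts[OF assms(2) h]
    define T X c where "T = t powr p" "X = x powr p" "c = l powr p"
    have pf': "0 \<le> T" "T \<le> X" "X < 1" "0 < c" "c \<le> 1" using pf by (auto simp: T_X_c_def)
    have d: "(1 + c*T) * (1 + X) - (1 + T) * (1 + c*X) = (1 - c) * (X - T)" by algebra
    have "(1 - c) * (X - T) \<ge> 0" using pf' by auto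
    then have le: "(1 + T) * (1 + c*X) \<le> (1 + c*T) * (1 + X)" using d by linarith
    have cX: "0 \<le> c*X" "0 \<le> c*T" using pf' by auto
    have p1: "0 < (1 + T) * (1 + c*X)" using pf' cX by (intro mult_pos_pos add_pos_nonneg) auto
    have "((1 + c*T) * (1 + X)) powr (-1/p) \<le> ((1 + T) * (1 + c*X)) powr (-1/p)"
      using assms le p1 by (intro powr_mono2') auto
    moreover have nn: "0 \<le> 1 + T" "0 \<le> 1 + c*X" "0 \<le> 1 + c*T" "0 \<le> 1 + X"
      using pf' cX by auto
    moreover have ft: "f t = (1+T) powr (-1/p)" "f x = (1+X) powr (-1/p)"
      "f (l*x) = (1+c*X) powr (-1/p)" "f (l*t) = (1+c*T) powr (-1/p)"
      by (simp_all add: f_def T_X_c_def pf(1,2))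
    ultimately show "-1 * (f t * f (l * x)) \<le> -1 * (f (l * t) * f x)"
    proof -
      have m1: "(1+T) powr (-1/p) * (1+c*X) powr (-1/p) = ((1+T)*(1+c*X)) powr (-1/p)"
        using powr_mult[of "1+T" "1+c*X" "-1/p"] nn by simp
      have m2: "(1+c*T) powr (-1/p) * (1+X) powr (-1/p) = ((1+c*T)*(1+X)) powr (-1/p)"
        using powr_mult[of "1+c*T" "1+X" "-1/p"] nn by simp
      show ?thesis unfolding ft using m1 m2 \<open>((1 + c*T) * (1 + X)) powr (-1/p) \<le> ((1 + T) * (1 + c*X)) powr (-1/p)\<close> by linarith
    qed
  qed (use assms in auto)
  then have "integral {0..s powr k} f / integral {0..r powr k} f \<le> (integral {0..s} f / integral {0..r} f) powr k"
    by linarith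
  then show ?thesis unfolding arsinh_p_def f_def .
qed

theorem lemma2p6:
  fixes k p r s :: real
  assumes "k > 1" and "p > 1"
    and "0 < r" "r < 1" and "0 < s" "s < 1" and "r \<ge> s"
  shows "(arcsin_p p s / arcsin_p p r) powr k \<le> arcsin_p p (s powr k) / arcsin_p p (r powr k)
    \<and> (artanh_p p s / artanh_p p r) powr k \<le> artanh_p p (s powr k) / artanh_p p (r powr k)
    \<and> arsinh_p p (s powr k) / arsinh_p p (r powr k) \<le> (arsinh_p p s / arsinh_p p r) powr k"
proof (intro conjI)
  show "(arcsin_p p s / arcsin_p p r) powr k \<le> arcsin_p p (s powr k) / arcsin_p p (r powr k)"
    by (rule arcsin_part[OF assms(1,2,5,7,4)])
  show "(artanh_p p s / artanh_p p r) powr k \<le> artanh_p p (s powr k) / artanh_p p (r powr k)"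
    by (rule artanh_part[OF assms(1,2,5,7,4)])
  show "arsinh_p p (s powr k) / arsinh_p p (r powr k) \<le> (arsinh_p p s / arsinh_p p r) powr k"
    by (rule arsinh_part[OF assms(1,2,5,7,4)])
qed

end
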